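(* Let $F$ be an SCF on $n$ voters and three alternatives. Then for every pair of distinct alternatives $a,b$, \[ M^{a,b}(F) \le 6 \sum_{i=1}^n M_i(F). \]
   Context: $L_3$ is the set of linear orders on three alternatives; an SCF is a map $F:(L_3)^n\to\{$alternatives$\}$. For a profile $x\in(L_3)^n$ and alternatives $a\ne b$, $x^{a,b}\in\{0,1\}^n$ is the vector with $x^{a,b}_i=1$ iff voter $i$ ranks $a$ above $b$. $M^{a,b}(F)=\Pr[F(x)=a,\ F(x')=b]$, where $x,x'$ are uniformly random profiles subject to the single restriction $x^{a,b}=x'^{a,b}$ (i.e. $x$ uniform and $x'$ uniform among profiles with the same $a$-vs-$b$ preferences). $M_i(F)$ is the probability that $x_i'$ is a profitable manipulation by voter $i$ at $x$ (i.e. voter $i$, according to $x_i$, strictly prefers $F(x_i',x_{-i})$ to $F(x)$), where $x_1,\dots,x_n,x_i'$ are independent uniform elements of $L_3$. *)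

theory Defs
  imports Complex_Main "HOL-Library.FuncSet"
begin

datatype alt = A1 | A2 | A3

lemma UNIV_alt: "(UNIV :: alt set) = {A1, A2, A3}"
  by (auto intro: alt.exhaust)

text \<open>A linear order on the alternatives is represented by the list of the three
alternatives from most preferred to least preferred.\<close>
definition L3 :: "alt list set" where
  "L3 = {r. distinct r \<and> set r = UNIV}"

definition prefers :: "alt list \<Rightarrow> alt \<Rightarrow> alt \<Rightarrow> bool" where
  "prefers r a b \<longleftrightarrow> (\<exists>i j. i < j \<and> j < length r \<and> r ! i = a \<and> r ! j = b)"

definition profiles :: "nat \<Rightarrow> (nat \<Rightarrow> alt list) set" where
  "profiles n = PiE {..<n} (\<lambda>_. L3)"

definition pairvec :: "nat \<Rightarrow> alt \<Rightarrow> alt \<Rightarrow> (nat \<Rightarrow> alt list) \<Rightarrow> nat \<Rightarrow> bool" where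
  "pairvec n a b x = (\<lambda>i. if i < n then prefers (x i) a b else False)"

text \<open>M^{a,b}(F) = Pr[F(x) = a and F(x') = b], x uniform, x' uniform among profiles
with the same a-vs-b vector as x.\<close>
definition Mab :: "nat \<Rightarrow> ((nat \<Rightarrow> alt list) \<Rightarrow> alt) \<Rightarrow> alt \<Rightarrow> alt \<Rightarrow> real" where
  "Mab n F a b =
     (\<Sum>x\<in>profiles n.
        (let S = {x' \<in> profiles n. pairvec n a b x' = pairvec n a b x} in
         real (card {x' \<in> S. F x = a \<and> F x' = b}) / real (card S)))
     / real (card (profiles n))"

text \<open>M_i(F): probability that x_i' is a profitable manipulation by voter i at x,
with x_1,...,x_n,x_i' independent uniform in L3.\<close>
definition Mi :: "nat \<Rightarrow> ((nat \<Rightarrow> alt list) \<Rightarrow> alt) \<Rightarrow> nat \<Rightarrow> real" where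
  "Mi n F i =
     real (card {(x, y). x \<in> profiles n \<and> y \<in> L3 \<and>
                         prefers (x i) (F (x(i := y))) (F x)})
     / (real (card (profiles n)) * real (card L3))"

end

theory Submission
  imports Defs
begin


definition goodp :: "('r \<Rightarrow> 'v \<Rightarrow> 'v \<Rightarrow> bool) \<Rightarrow> 'v \<Rightarrow> 'v \<Rightarrow> 'r \<Rightarrow> 'r \<Rightarrow> bool" where
  "goodp pref a b t u \<longleftrightarrow> (\<forall>x y. (x = a \<or> x = b) \<and> y \<noteq> x \<longrightarrow> pref t y x \<or> pref u x y)"

lemma card_UNIV_alt: "card (UNIV :: alt set) = 3"
  by (simp add: UNIV_alt)

lemma L3_eq: "L3 = {[A1,A2,A3],[A1,A3,A2],[A2,A1,A3],[A2,A3,A1],[A3,A1,A2],[A3,A2,A1]}"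
proof
  show "{[A1,A2,A3],[A1,A3,A2],[A2,A1,A3],[A2,A3,A1],[A3,A1,A2],[A3,A2,A1]} \<subseteq> L3"
    by (auto simp: L3_def UNIV_alt)
next
  show "L3 \<subseteq> {[A1,A2,A3],[A1,A3,A2],[A2,A1,A3],[A2,A3,A1],[A3,A1,A2],[A3,A2,A1]}"
  proof
    fix r assume "r \<in> L3"
    then have d: "distinct r" and s: "set r = UNIV" by (auto simp: L3_def)
    then have "length r = 3" using distinct_card[OF d] card_UNIV_alt by simp
    then obtain x y z where r: "r = [x,y,z]"
      by (auto simp: length_Suc_conv numeral_3_eq_3)
    show "r \<in> {[A1,A2,A3],[A1,A3,A2],[A2,A1,A3],[A2,A3,A1],[A3,A1,A2],[A3,A2,A1]}"
      using d s unfolding r UNIV_alt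
      by (cases x; cases y; cases z) auto
  qed
qed

lemma ex3: "(\<exists>i j. i < j \<and> j < Suc (Suc (Suc 0)) \<and> P i j) \<longleftrightarrow> P 0 (Suc 0) \<or> P 0 (Suc (Suc 0)) \<or> P (Suc 0) (Suc (Suc 0))"
proof
  assume "\<exists>i j. i < j \<and> j < Suc (Suc (Suc 0)) \<and> P i j"
  then obtain i j where "i < j" "j < Suc (Suc (Suc 0))" "P i j" by blast
  then have "(i = 0 \<and> j = Suc 0) \<or> (i = 0 \<and> j = Suc (Suc 0)) \<or> (i = Suc 0 \<and> j = Suc (Suc 0))" by auto
  then show "P 0 (Suc 0) \<or> P 0 (Suc (Suc 0)) \<or> P (Suc 0) (Suc (Suc 0))" using \<open>P i j\<close> by auto
next
  assume "P 0 (Suc 0) \<or> P 0 (Suc (Suc 0)) \<or> P (Suc 0) (Suc (Suc 0))"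
  then show "\<exists>i j. i < j \<and> j < Suc (Suc (Suc 0)) \<and> P i j" by blast
qed

lemma prefers3: "prefers [x,y,z] u v \<longleftrightarrow> (u = x \<and> v = y) \<or> (u = x \<and> v = z) \<or> (u = y \<and> v = z)"
  unfolding prefers_def using ex3[of "\<lambda>i j. [x,y,z]!i = u \<and> [x,y,z]!j = v"] by (simp add: eq_commute)

lemma all_alt: "(\<forall>x::alt. P x) \<longleftrightarrow> P A1 \<and> P A2 \<and> P A3"
  by (metis alt.exhaust)

definition Ls :: "alt list list" where
  "Ls = [[A1,A2,A3],[A1,A3,A2],[A2,A1,A3],[A2,A3,A1],[A3,A1,A2],[A3,A2,A1]]"

lemma L3_Ls: "L3 = set Ls" unfolding L3_eq Ls_def by simp

definition cls :: "alt \<Rightarrow> alt \<Rightarrow> bool \<Rightarrow> alt list set" where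
  "cls a b v = {r \<in> L3. prefers r a b = v}"

lemma card_cls: "a \<noteq> b \<Longrightarrow> card (cls a b v) = 3"
  unfolding cls_def L3_Ls set_filter[symmetric] card_set
  by (cases a; cases b; cases v) (simp_all add: Ls_def prefers3)

lemma card_L3: "card L3 = 6"
  unfolding L3_Ls card_set by (simp add: Ls_def)

lemma good_all: "\<forall>t\<in>set Ls. \<forall>u\<in>set Ls. \<forall>a\<in>set [A1,A2,A3]. \<forall>b\<in>set [A1,A2,A3]. a \<noteq> b \<longrightarrow> prefers t a b = prefers u a b \<longrightarrow> t \<noteq> u \<longrightarrow>
   (\<forall>x\<in>set [A1,A2,A3]. \<forall>y\<in>set [A1,A2,A3]. (x = a \<or> x = b) \<and> y \<noteq> x \<longrightarrow> prefers t y x \<or> prefers u x y) \<or>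
   (\<forall>x\<in>set [A1,A2,A3]. \<forall>y\<in>set [A1,A2,A3]. (x = a \<or> x = b) \<and> y \<noteq> x \<longrightarrow> prefers u y x \<or> prefers t x y)"
  unfolding Ls_def by (simp only: list.set insert_iff empty_iff ball_simps prefers3 alt.distinct simp_thms list.inject refl)

lemma good_L3:
  assumes "t \<in> L3" "u \<in> L3" "prefers t a b = prefers u a b" "t \<noteq> u" "a \<noteq> b"
  shows "goodp prefers a b t u \<or> goodp prefers a b u t"
proof -
  have U: "set [A1,A2,A3] = UNIV" using UNIV_alt by simp
  have "a \<in> set [A1,A2,A3]" "b \<in> set [A1,A2,A3]" unfolding U by auto
  then show ?thesis
    using good_all assms unfolding goodp_def L3_Ls U by blast
qed


lemma sum_PiE_Suc:
  "(\<Sum>p\<in>PiE {..<Suc n} C. (\<phi> p :: real)) = (\<Sum>t\<in>C n. \<Sum>q\<in>PiE {..<n} C. \<phi> (q(n:=t)))"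
proof -
  have e: "PiE {..<Suc n} C = (\<lambda>(y,g). g(n:=y)) ` (C n \<times> PiE {..<n} C)"
    using PiE_insert_eq[of n "{..<n}" C] by (simp add: lessThan_Suc)
  have i: "inj_on (\<lambda>(y,g). g(n:=y)) (C n \<times> PiE {..<n} C)"
    by (rule inj_combinator) simp
  show ?thesis
    unfolding e sum.reindex[OF i] sum.cartesian_product by (simp add: case_prod_beta comp_def)
qed

lemma pair_arith:
  fixes pa pb bt bu N D :: real
  assumes "0\<le>pa" "pa\<le>N" "0\<le>pb" "pb\<le>N" "0\<le>bt" "bt\<le>N" "0\<le>bu" "bu\<le>N"
    "pa-pb \<le> D" "bt-bu \<le> D" "0\<le>D"
  shows "-((pa-pb)*(bt-bu)) \<le> N*D"
proof (cases "pa-pb \<ge> 0")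
  case True
  show ?thesis
  proof (cases "bt - bu \<ge> 0")
    case True
    then have "0 \<le> (pa-pb)*(bt-bu)" using \<open>pa-pb\<ge>0\<close> by simp
    moreover have "0 \<le> N*D" using assms by simp
    ultimately show ?thesis by linarith
  next
    case False
    have "(pa-pb)*(bu-bt) \<le> D*N"
      by (rule mult_mono) (use assms False True in auto)
    then show ?thesis by (simp add: algebra_simps)
  qed
next
  case False
  show ?thesis
  proof (cases "bt - bu \<ge> 0")
    case True
    have "(pb-pa)*(bt-bu) \<le> N*D"
      by (rule mult_mono) (use assms False True in auto)
    then show ?thesis by (simp add: algebra_simps)
  next
    case F2: False
    then have "0 \<le> (pa-pb)*(bt-bu)" using False by (simp add: mult_nonpos_nonpos)
    moreover have "0 \<le> N*D" using assms by simp
    ultimately show ?thesis by linarith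
  qed
qed

lemma chebyshev_id:
  fixes \<alpha> \<beta> :: "'a \<Rightarrow> real"
  shows "(\<Sum>t\<in>A. \<Sum>u\<in>A. (\<alpha> t - \<alpha> u) * (\<beta> t - \<beta> u))
     = 2 * real (card A) * (\<Sum>t\<in>A. \<alpha> t * \<beta> t) - 2 * ((\<Sum>t\<in>A. \<alpha> t) * (\<Sum>u\<in>A. \<beta> u))"
proof -
  have "(\<Sum>t\<in>A. \<Sum>u\<in>A. (\<alpha> t - \<alpha> u) * (\<beta> t - \<beta> u))
     = (\<Sum>t\<in>A. \<Sum>u\<in>A. \<alpha> t * \<beta> t) - (\<Sum>t\<in>A. \<Sum>u\<in>A. \<alpha> t * \<beta> u)
       - (\<Sum>t\<in>A. \<Sum>u\<in>A. \<alpha> u * \<beta> t) + (\<Sum>t\<in>A. \<Sum>u\<in>A. \<alpha> u * \<beta> u)"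
    by (simp add: algebra_simps sum.distrib sum_subtractf)
  also have "(\<Sum>t\<in>A. \<Sum>u\<in>A. \<alpha> u * \<beta> t) = (\<Sum>t\<in>A. \<Sum>u\<in>A. \<alpha> t * \<beta> u)"
    by (rule sum.swap)
  also have "(\<Sum>t\<in>A. \<Sum>u\<in>A. \<alpha> u * \<beta> u) = (\<Sum>t\<in>A. \<Sum>u\<in>A. \<alpha> t * \<beta> t)"
    by (rule sum.swap)
  also have "(\<Sum>t\<in>A. \<Sum>u\<in>A. \<alpha> t * \<beta> u) = (\<Sum>t\<in>A. \<alpha> t) * (\<Sum>u\<in>A. \<beta> u)"
    by (simp add: sum_product)
  also have "(\<Sum>t\<in>A. \<Sum>u\<in>A. \<alpha> t * \<beta> t) = real (card A) * (\<Sum>t\<in>A. \<alpha> t * \<beta> t)"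
    by (simp add: sum_distrib_left)
  finally show ?thesis by simp
qed


lemma key:
  fixes C :: "nat \<Rightarrow> 'r set" and pref :: "'r \<Rightarrow> 'v \<Rightarrow> 'v \<Rightarrow> bool" and a b :: 'v
  assumes ab: "a \<noteq> b" and fin: "\<And>i. finite (C i)" and ne: "\<And>i. C i \<noteq> {}"
    and good: "\<And>i t u. t \<in> C i \<Longrightarrow> u \<in> C i \<Longrightarrow> t \<noteq> u \<Longrightarrow> goodp pref a b t u \<or> goodp pref a b u t"
  shows "(\<Sum>p\<in>PiE {..<n} C. of_bool (G p = a)) * (\<Sum>p\<in>PiE {..<n} C. of_bool (G p = b))
     \<le> real (card (PiE {..<n} C)) * (\<Sum>i<n. (\<Sum>p\<in>PiE {..<n} C. \<Sum>r\<in>C i.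
          of_bool (pref (p i) (G (p(i:=r))) (G p))) / real (card (C i)))"
  using assms
proof (induction n arbitrary: G)
  case 0
  have e: "PiE {..<0} C = {\<lambda>_. undefined}" by simp
  show ?case unfolding e using "0.prems"(1) by (simp only: sum.insert_if finite.emptyI sum.empty) auto
next
  case (Suc n)
  define \<Omega> where "\<Omega> = PiE {..<n} C"
  define k where "k = real (card (C n))"
  define N where "N = real (card \<Omega>)"
  define \<alpha> where "\<alpha> t = (\<Sum>q\<in>\<Omega>. of_bool (G (q(n:=t)) = a) :: real)" for t
  define \<beta> where "\<beta> t = (\<Sum>q\<in>\<Omega>. of_bool (G (q(n:=t)) = b) :: real)" for t
  define Mc where "Mc i t = (\<Sum>q\<in>\<Omega>. \<Sum>r\<in>C i. of_bool (pref (q i) (G ((q(i:=r))(n:=t))) (G (q(n:=t)))) :: real)" for i t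
  define m where "m t u = (\<Sum>q\<in>\<Omega>. of_bool (pref t (G (q(n:=u))) (G (q(n:=t)))) :: real)" for t u
  have finO: "finite \<Omega>" unfolding \<Omega>_def by (simp add: fin finite_PiE)
  have kpos: "k > 0" unfolding k_def using fin ne by (simp add: card_gt_0_iff)
  have IH: "\<alpha> t * \<beta> t \<le> N * (\<Sum>i<n. Mc i t / real (card (C i)))" for t
    using Suc.IH[of "\<lambda>q. G (q(n:=t))"] Suc.prems unfolding \<alpha>_def \<beta>_def Mc_def N_def \<Omega>_def
    by blast
  have cardS: "real (card (PiE {..<Suc n} C)) = k * N"
    unfolding k_def N_def \<Omega>_def by (simp add: card_PiE lessThan_Suc)
  have L1: "(\<Sum>p\<in>PiE {..<Suc n} C. of_bool (G p = a)) = (\<Sum>t\<in>C n. \<alpha> t)"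
    unfolding \<alpha>_def \<Omega>_def by (rule sum_PiE_Suc)
  have L2: "(\<Sum>p\<in>PiE {..<Suc n} C. of_bool (G p = b)) = (\<Sum>t\<in>C n. \<beta> t)"
    unfolding \<beta>_def \<Omega>_def by (rule sum_PiE_Suc)
  have R1: "(\<Sum>p\<in>PiE {..<Suc n} C. \<Sum>r\<in>C i. of_bool (pref (p i) (G (p(i:=r))) (G p)))
      = (\<Sum>t\<in>C n. Mc i t)" if "i < n" for i
  proof -
    have "(\<Sum>p\<in>PiE {..<Suc n} C. \<Sum>r\<in>C i. of_bool (pref (p i) (G (p(i:=r))) (G p)) :: real)
      = (\<Sum>t\<in>C n. \<Sum>q\<in>\<Omega>. \<Sum>r\<in>C i. of_bool (pref ((q(n:=t)) i) (G ((q(n:=t))(i:=r))) (G (q(n:=t)))))"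
      unfolding \<Omega>_def by (rule sum_PiE_Suc)
    also have "\<dots> = (\<Sum>t\<in>C n. Mc i t)"
      unfolding Mc_def using that by (simp add: fun_upd_twist)
    finally show ?thesis .
  qed
  have R2: "(\<Sum>p\<in>PiE {..<Suc n} C. \<Sum>r\<in>C n. of_bool (pref (p n) (G (p(n:=r))) (G p)))
      = (\<Sum>t\<in>C n. \<Sum>u\<in>C n. m t u)"
  proof -
    have "(\<Sum>p\<in>PiE {..<Suc n} C. \<Sum>r\<in>C n. of_bool (pref (p n) (G (p(n:=r))) (G p)) :: real)
      = (\<Sum>t\<in>C n. \<Sum>q\<in>\<Omega>. \<Sum>u\<in>C n. of_bool (pref ((q(n:=t)) n) (G ((q(n:=t))(n:=u))) (G (q(n:=t)))))"
      unfolding \<Omega>_def by (rule sum_PiE_Suc)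
    also have "\<dots> = (\<Sum>t\<in>C n. \<Sum>u\<in>C n. m t u)"
      unfolding m_def by (simp add: sum.swap[of _ \<Omega>])
    finally show ?thesis .
  qed
  have bnd: "0 \<le> \<alpha> t \<and> \<alpha> t \<le> N \<and> 0 \<le> \<beta> t \<and> \<beta> t \<le> N" for t
  proof -
    have "\<alpha> t \<le> (\<Sum>q\<in>\<Omega>. 1)" unfolding \<alpha>_def by (rule sum_mono) simp
    moreover have "\<beta> t \<le> (\<Sum>q\<in>\<Omega>. 1)" unfolding \<beta>_def by (rule sum_mono) simp
    ultimately show ?thesis unfolding N_def \<alpha>_def \<beta>_def by (simp add: sum_nonneg)
  qed
  have mnn: "0 \<le> m t u" for t u unfolding m_def by (simp add: sum_nonneg)
  have dir: "\<alpha> t - \<alpha> u \<le> m t u + m u t \<and> \<beta> t - \<beta> u \<le> m t u + m u t"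
    if g: "goodp pref a b t u" for t u
  proof -
    have pa: "of_bool (G (q(n:=t)) = a) - of_bool (G (q(n:=u)) = a)
        \<le> of_bool (pref t (G (q(n:=u))) (G (q(n:=t)))) + (of_bool (pref u (G (q(n:=t))) (G (q(n:=u)))) :: real)" for q
      using g unfolding goodp_def by (cases "G (q(n:=t)) = a"; cases "G (q(n:=u)) = a") force+
    have pb: "of_bool (G (q(n:=t)) = b) - of_bool (G (q(n:=u)) = b)
        \<le> of_bool (pref t (G (q(n:=u))) (G (q(n:=t)))) + (of_bool (pref u (G (q(n:=t))) (G (q(n:=u)))) :: real)" for q
      using g unfolding goodp_def by (cases "G (q(n:=t)) = b"; cases "G (q(n:=u)) = b") force+
    have "\<alpha> t - \<alpha> u \<le> m t u + m u t"
      unfolding \<alpha>_def m_def sum_subtractf[symmetric] sum.distrib[symmetric]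
      by (rule sum_mono) (rule pa)
    moreover have "\<beta> t - \<beta> u \<le> m t u + m u t"
      unfolding \<beta>_def m_def sum_subtractf[symmetric] sum.distrib[symmetric]
      by (rule sum_mono) (rule pb)
    ultimately show ?thesis by blast
  qed
  have pair: "-((\<alpha> t - \<alpha> u) * (\<beta> t - \<beta> u)) \<le> N * (m t u + m u t)"
    if "t \<in> C n" "u \<in> C n" for t u
  proof (cases "t = u")
    case True
    then show ?thesis using mnn bnd[of t] by simp
  next
    case False
    then have "goodp pref a b t u \<or> goodp pref a b u t" using Suc.prems(4) that by blast
    then show ?thesis
    proof
      assume "goodp pref a b t u"
      from dir[OF this] show ?thesis
        using pair_arith[of "\<alpha> t" N "\<alpha> u" "\<beta> t" "\<beta> u" "m t u + m u t"] bnd[of t] bnd[of u] mnn[of t u] mnn[of u t]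
        by linarith
    next
      assume "goodp pref a b u t"
      from dir[OF this] have "-((\<alpha> u - \<alpha> t) * (\<beta> u - \<beta> t)) \<le> N * (m u t + m t u)"
        using pair_arith[of "\<alpha> u" N "\<alpha> t" "\<beta> u" "\<beta> t" "m u t + m t u"] bnd[of t] bnd[of u] mnn[of t u] mnn[of u t]
        by linarith
      then show ?thesis by (simp add: algebra_simps)
    qed
  qed
  have sumpair: "-(\<Sum>t\<in>C n. \<Sum>u\<in>C n. (\<alpha> t - \<alpha> u) * (\<beta> t - \<beta> u)) \<le> N * (2 * (\<Sum>t\<in>C n. \<Sum>u\<in>C n. m t u))"
  proof -
    have "-(\<Sum>t\<in>C n. \<Sum>u\<in>C n. (\<alpha> t - \<alpha> u) * (\<beta> t - \<beta> u)) = (\<Sum>t\<in>C n. \<Sum>u\<in>C n. -((\<alpha> t - \<alpha> u) * (\<beta> t - \<beta> u)))"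
      by (simp add: sum_negf)
    also have "\<dots> \<le> (\<Sum>t\<in>C n. \<Sum>u\<in>C n. N * (m t u + m u t))"
      by (intro sum_mono pair)
    also have "\<dots> = N * ((\<Sum>t\<in>C n. \<Sum>u\<in>C n. m t u) + (\<Sum>t\<in>C n. \<Sum>u\<in>C n. m u t))"
      by (simp only: sum.distrib sum_distrib_left distrib_left)
    also have "(\<Sum>t\<in>C n. \<Sum>u\<in>C n. m u t) = (\<Sum>t\<in>C n. \<Sum>u\<in>C n. m t u)"
      by (rule sum.swap)
    finally show ?thesis by simp
  qed
  have main: "(\<Sum>t\<in>C n. \<alpha> t) * (\<Sum>t\<in>C n. \<beta> t) \<le> k * (\<Sum>t\<in>C n. \<alpha> t * \<beta> t) + N * (\<Sum>t\<in>C n. \<Sum>u\<in>C n. m t u)"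
    using sumpair chebyshev_id[of \<alpha> \<beta> "C n"] unfolding k_def by linarith
  have "k * (\<Sum>t\<in>C n. \<alpha> t * \<beta> t) \<le> k * (\<Sum>t\<in>C n. N * (\<Sum>i<n. Mc i t / real (card (C i))))"
    using kpos IH by (intro mult_left_mono sum_mono) auto
  also have "k * (\<Sum>t\<in>C n. N * (\<Sum>i<n. Mc i t / real (card (C i))))
      = k * N * (\<Sum>i<n. (\<Sum>t\<in>C n. Mc i t) / real (card (C i)))"
    by (simp add: sum_distrib_left sum_divide_distrib sum.swap[of _ "C n"] mult.assoc)
  finally have kk: "k * (\<Sum>t\<in>C n. \<alpha> t * \<beta> t) \<le> k * N * (\<Sum>i<n. (\<Sum>t\<in>C n. Mc i t) / real (card (C i)))" .
  have kk2: "k * N * ((\<Sum>t\<in>C n. \<Sum>u\<in>C n. m t u) / k) = N * (\<Sum>t\<in>C n. \<Sum>u\<in>C n. m t u)"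
    using kpos by simp
  have main2: "(\<Sum>t\<in>C n. \<alpha> t) * (\<Sum>t\<in>C n. \<beta> t) \<le>
      k * N * (\<Sum>i<n. (\<Sum>t\<in>C n. Mc i t) / real (card (C i))) + k * N * ((\<Sum>t\<in>C n. \<Sum>u\<in>C n. m t u) / k)"
    using main kk kk2 by linarith
  have eqS: "(\<Sum>i<Suc n. (\<Sum>p\<in>PiE {..<Suc n} C. \<Sum>r\<in>C i. of_bool (pref (p i) (G (p(i:=r))) (G p))) / real (card (C i)))
     = (\<Sum>i<n. (\<Sum>t\<in>C n. Mc i t) / real (card (C i))) + (\<Sum>t\<in>C n. \<Sum>u\<in>C n. m t u) / k"
    using R1 R2 unfolding k_def by simp
  have dl: "k * N * ((\<Sum>i<n. (\<Sum>t\<in>C n. Mc i t) / real (card (C i))) + (\<Sum>t\<in>C n. \<Sum>u\<in>C n. m t u) / k)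
     = k * N * (\<Sum>i<n. (\<Sum>t\<in>C n. Mc i t) / real (card (C i))) + k * N * ((\<Sum>t\<in>C n. \<Sum>u\<in>C n. m t u) / k)"
    by (rule distrib_left)
  show ?case
    unfolding L1 L2 cardS eqS dl by (rule main2)
qed


lemma card_filter_sum: "finite A \<Longrightarrow> real (card {x\<in>A. Q x}) = (\<Sum>x\<in>A. of_bool (Q x))"
proof -
  assume f: "finite A"
  have "{x\<in>A. Q x} = A \<inter> {x. Q x}" by blast
  then show ?thesis using f by simp
qed

theorem lemma3p2:
  fixes n :: nat and F :: "(nat \<Rightarrow> alt list) \<Rightarrow> alt" and a b :: alt
  assumes "a \<noteq> b"
  shows "Mab n F a b \<le> 6 * (\<Sum>i<n. Mi n F i)"
proof -
  define P where "P = profiles n"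
  define S where "S x = {x' \<in> P. pairvec n a b x' = pairvec n a b x}" for x
  define C where "C (x :: nat \<Rightarrow> alt list) = (\<lambda>i::nat. cls a b (prefers (x i) a b))" for x
  have finL3: "finite L3" unfolding L3_Ls by simp
  have finP: "finite P" unfolding P_def profiles_def using finL3 by (simp add: finite_PiE)
  have cardP: "real (card P) = 6 ^ n" unfolding P_def profiles_def by (simp add: card_PiE card_L3)
  have SC: "S x = PiE {..<n} (C x)" if "x \<in> P" for x
    using that unfolding S_def C_def P_def profiles_def cls_def
    by (auto simp: PiE_iff pairvec_def fun_eq_iff extensional_def)
  have finC: "finite (C x i)" for x i unfolding C_def cls_def using finL3 by simp
  have cardC: "card (C x i) = 3" for x i unfolding C_def using card_cls[OF assms] by simp
  have cardS: "real (card (S x)) = 3 ^ n" if "x \<in> P" for x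
    unfolding SC[OF that] by (simp add: card_PiE cardC)
  have finS: "finite (S x)" for x unfolding S_def using finP by simp
  have SP: "S x \<subseteq> P" for x unfolding S_def by auto
  have Sx: "S x'' = S x" if "x'' \<in> S x" for x x''
    using that unfolding S_def by auto
  have swap: "(\<Sum>x\<in>P. \<Sum>x''\<in>S x. g x'') = 3 ^ n * (\<Sum>x\<in>P. g x)" for g :: "_ \<Rightarrow> real"
  proof -
    have "(\<Sum>x\<in>P. \<Sum>x''\<in>S x. g x'') = (\<Sum>x\<in>P. \<Sum>x''\<in>P. if pairvec n a b x'' = pairvec n a b x then g x'' else 0)"
      unfolding S_def using finP by (simp add: sum.inter_filter)
    also have "\<dots> = (\<Sum>x''\<in>P. \<Sum>x\<in>P. if pairvec n a b x = pairvec n a b x'' then g x'' else 0)"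
      by (subst sum.swap) (simp add: eq_commute)
    also have "\<dots> = (\<Sum>x''\<in>P. \<Sum>x\<in>S x''. g x'')"
      unfolding S_def by (rule sum.cong[OF refl], subst sum.inter_filter[OF finP], rule refl)
    also have "\<dots> = (\<Sum>x''\<in>P. 3 ^ n * g x'')"
      by (rule sum.cong) (simp_all add: cardS)
    finally show ?thesis by (simp add: sum_distrib_left)
  qed
  define W where "W i = (\<Sum>x\<in>P. \<Sum>y\<in>L3. of_bool (prefers (x i) (F (x(i:=y))) (F x)) :: real)" for i
  have Mi_eq: "Mi n F i = W i / (6 ^ n * 6)" for i
  proof -
    have e: "{(x, y). x \<in> P \<and> y \<in> L3 \<and> prefers (x i) (F (x(i := y))) (F x)}
       = Sigma P (\<lambda>x. {y\<in>L3. prefers (x i) (F (x(i := y))) (F x)})" by auto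
    have "real (card {(x, y). x \<in> P \<and> y \<in> L3 \<and> prefers (x i) (F (x(i := y))) (F x)}) = W i"
      unfolding e W_def using finP finL3 by (simp add: card_SigmaI card_filter_sum)
    then show ?thesis unfolding Mi_def P_def[symmetric] using cardP by (simp add: card_L3)
  qed
  define g where "g x = (\<Sum>x'\<in>S x. of_bool (F x = a) * of_bool (F x' = b) :: real)" for x
  have Mab_eq: "Mab n F a b = (\<Sum>x\<in>P. g x) / (3 ^ n * 6 ^ n)"
  proof -
    have "Mab n F a b = (\<Sum>x\<in>P. g x / 3 ^ n) / 6 ^ n"
      unfolding Mab_def P_def[symmetric] S_def[symmetric] Let_def cardP
    proof (intro arg_cong[where f="\<lambda>z. z / 6 ^ n"] sum.cong refl)
      fix x assume x: "x \<in> P"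
      have "real (card {x' \<in> S x. F x = a \<and> F x' = b}) = g x"
        unfolding g_def using finS by (simp add: card_filter_sum)
      then show "real (card {x' \<in> S x. F x = a \<and> F x' = b}) / real (card (S x)) = g x / 3 ^ n"
        using cardS[OF x] by simp
    qed
    then show ?thesis by (simp add: sum_divide_distrib)
  qed
  define h where "h i p = (\<Sum>y\<in>L3. of_bool (prefers (p i) (F (p(i:=y))) (F p)) :: real)" for i p
  have hnn: "0 \<le> h i p" for i p unfolding h_def by (simp add: sum_nonneg)
  have "3 ^ n * (\<Sum>x\<in>P. g x) = (\<Sum>x\<in>P. \<Sum>x''\<in>S x. g x'')" by (rule swap[symmetric])
  also have "\<dots> = (\<Sum>x\<in>P. (\<Sum>p\<in>S x. of_bool (F p = a)) * (\<Sum>p\<in>S x. of_bool (F p = b)))"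
  proof (rule sum.cong[OF refl])
    fix x assume "x \<in> P"
    have "(\<Sum>x''\<in>S x. g x'') = (\<Sum>x''\<in>S x. \<Sum>x'\<in>S x. of_bool (F x'' = a) * of_bool (F x' = b))"
      unfolding g_def by (rule sum.cong) (simp_all add: Sx)
    then show "(\<Sum>x''\<in>S x. g x'') = (\<Sum>p\<in>S x. of_bool (F p = a)) * (\<Sum>p\<in>S x. of_bool (F p = b))"
      by (simp add: sum_product)
  qed
  also have "\<dots> \<le> (\<Sum>x\<in>P. 3 ^ n * (\<Sum>i<n. (\<Sum>p\<in>S x. h i p) / 3))"
  proof (rule sum_mono)
    fix x assume x: "x \<in> P"
    have k: "(\<Sum>p\<in>PiE {..<n} (C x). of_bool (F p = a)) * (\<Sum>p\<in>PiE {..<n} (C x). of_bool (F p = b))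
     \<le> real (card (PiE {..<n} (C x))) * (\<Sum>i<n. (\<Sum>p\<in>PiE {..<n} (C x). \<Sum>r\<in>C x i.
          of_bool (prefers (p i) (F (p(i:=r))) (F p))) / real (card (C x i)))"
    proof (rule key[OF assms finC])
      fix i show "C x i \<noteq> {}" using cardC[of x i] by auto
    next
      fix i t u assume "t \<in> C x i" "u \<in> C x i" "t \<noteq> u"
      then show "goodp prefers a b t u \<or> goodp prefers a b u t"
        unfolding C_def cls_def using good_L3[OF _ _ _ _ assms] by auto
    qed
    have le: "(\<Sum>p\<in>PiE {..<n} (C x). \<Sum>r\<in>C x i. of_bool (prefers (p i) (F (p(i:=r))) (F p)))
        \<le> (\<Sum>p\<in>S x. h i p)" for i
      unfolding SC[OF x] h_def
    proof (rule sum_mono)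
      fix p show "(\<Sum>r\<in>C x i. of_bool (prefers (p i) (F (p(i:=r))) (F p))) \<le> (\<Sum>y\<in>L3. of_bool (prefers (p i) (F (p(i:=y))) (F p)) :: real)"
        by (rule sum_mono2[OF finL3]) (auto simp: C_def cls_def)
    qed
    have "(\<Sum>i<n. (\<Sum>p\<in>PiE {..<n} (C x). \<Sum>r\<in>C x i.
          of_bool (prefers (p i) (F (p(i:=r))) (F p))) / real (card (C x i)))
        \<le> (\<Sum>i<n. (\<Sum>p\<in>S x. h i p) / 3)"
      using le by (intro sum_mono) (simp add: cardC divide_right_mono)
    then show "(\<Sum>p\<in>S x. of_bool (F p = a)) * (\<Sum>p\<in>S x. of_bool (F p = b)) \<le> 3 ^ n * (\<Sum>i<n. (\<Sum>p\<in>S x. h i p) / 3)"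
    proof -
      note le2 = \<open>(\<Sum>i<n. _) \<le> _\<close>
      have m: "(3::real) ^ n * (\<Sum>i<n. (\<Sum>p\<in>PiE {..<n} (C x). \<Sum>r\<in>C x i.
          of_bool (prefers (p i) (F (p(i:=r))) (F p))) / real (card (C x i)))
        \<le> 3 ^ n * (\<Sum>i<n. (\<Sum>p\<in>S x. h i p) / 3)"
        using le2 by (rule mult_left_mono) simp
      have c: "real (card (PiE {..<n} (C x))) = 3 ^ n" using cardS[OF x] SC[OF x] by simp
      show ?thesis unfolding SC[OF x] using k[unfolded c] m[unfolded SC[OF x]] by linarith
    qed
  qed
  also have "\<dots> = 3 ^ n / 3 * (\<Sum>i<n. \<Sum>x\<in>P. \<Sum>p\<in>S x. h i p)"
    by (simp add: sum_distrib_left sum_divide_distrib sum.swap[of _ P])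
  also have "\<dots> = 3 ^ n / 3 * (\<Sum>i<n. 3 ^ n * W i)"
    unfolding swap h_def W_def by simp
  finally have G: "3 ^ n * (\<Sum>x\<in>P. g x) \<le> 3 ^ n / 3 * (\<Sum>i<n. 3 ^ n * W i)" .
  have G1: "3 ^ n / 3 * (\<Sum>i<n. 3 ^ n * W i) = 3 ^ n * ((3 ^ n / 3) * (\<Sum>i<n. W i))"
    by (simp add: sum_distrib_left[symmetric])
  have G2: "(\<Sum>x\<in>P. g x) \<le> (3 ^ n / 3) * (\<Sum>i<n. W i)"
    using G unfolding G1 by (rule mult_left_le_imp_le) simp
  have "Mab n F a b \<le> ((3 ^ n / 3) * (\<Sum>i<n. W i)) / (3 ^ n * 6 ^ n)"
    unfolding Mab_eq by (rule divide_right_mono[OF G2]) simp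
  also have "\<dots> = (\<Sum>i<n. W i) / 6 ^ n / 3" by (simp add: field_simps)
  also have "\<dots> \<le> (\<Sum>i<n. W i) / 6 ^ n"
  proof -
    have "0 \<le> (\<Sum>i<n. W i)" unfolding W_def by (intro sum_nonneg) simp
    then have "0 \<le> (\<Sum>i<n. W i) / 6 ^ n" by simp
    moreover have "\<And>z::real. 0 \<le> z \<Longrightarrow> z / 3 \<le> z" by linarith
    ultimately show ?thesis by blast
  qed
  also have "\<dots> = 6 * (\<Sum>i<n. Mi n F i)"
    unfolding Mi_eq by (simp add: sum_divide_distrib[symmetric] field_simps)
  finally show ?thesis .
qed

end
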